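(* Let $\mathbb{F}$ be an infinite field with $\operatorname{char}(\mathbb{F})\neq 2$ and let $G$ be a non-abelian group with a group involution $\ast$ and a non-trivial orientation $\sigma:G\to\{\pm1\}$ such that $gg^\ast\in N=\ker\sigma$ for all $g\in G$. Suppose $\mathbb{F}G$ is normal with respect to the oriented involution $\circledast$ and that $N$, with the restriction of $\ast$, is an SLC-group. Then $G$ has a unique non-identity commutator $s$, and $s$ is central in $G$.
   Context: A group involution on $G$ is a map $\ast:G\to G$ with $(gh)^\ast=h^\ast g^\ast$ and $(g^\ast)^\ast=g$ (the condition $gg^\ast\in N$ implies $N^\ast=N$). An orientation is a group homomorphism $\sigma:G\to\{\pm1\}$. The oriented involution is $(\sum_g\alpha_g g)^\circledast=\sum_g\alpha_g\sigma(g)g^\ast$ on $\mathbb{F}G$. $\mathbb{F}G$ is normal if $\alpha\alpha^\circledast=\alpha^\circledast\alpha$ for all $\alpha\in\mathbb{F}G$. $(g,h)=g^{-1}h^{-1}gh$; "$H$ has a unique non-identity commutator $s$" means $\{(g,h):g,h\in H\}=\{1,s\}$. A group $H$ is an LC-group if it is non-abelian and for all $g,h\in H$: $gh=hg$ iff at least one of $g,h,gh$ is in the center $\zeta(H)$. $H$ with involution $\ast$ is an SLC-group if it is an LC-group with a unique non-identity commutator $s$ and $h^\ast=h$ for $h\in\zeta(H)$, $h^\ast=sh$ for $h\notin\zeta(H)$. *)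

theory Defs
  imports "HOL-Algebra.Group"
begin

definition commutator :: "('g, 'b) monoid_scheme \<Rightarrow> 'g \<Rightarrow> 'g \<Rightarrow> 'g" where
  "commutator H g h = inv\<^bsub>H\<^esub> g \<otimes>\<^bsub>H\<^esub> inv\<^bsub>H\<^esub> h \<otimes>\<^bsub>H\<^esub> g \<otimes>\<^bsub>H\<^esub> h"

definition commutators :: "('g, 'b) monoid_scheme \<Rightarrow> 'g set" where
  "commutators H = {commutator H g h | g h. g \<in> carrier H \<and> h \<in> carrier H}"

definition grp_center :: "('g, 'b) monoid_scheme \<Rightarrow> 'g set" where
  "grp_center H = {z \<in> carrier H. \<forall>x \<in> carrier H. z \<otimes>\<^bsub>H\<^esub> x = x \<otimes>\<^bsub>H\<^esub> z}"

definition abelian :: "('g, 'b) monoid_scheme \<Rightarrow> bool" where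
  "abelian H \<longleftrightarrow> (\<forall>x \<in> carrier H. \<forall>y \<in> carrier H. x \<otimes>\<^bsub>H\<^esub> y = y \<otimes>\<^bsub>H\<^esub> x)"

definition unique_nonid_commutator :: "('g, 'b) monoid_scheme \<Rightarrow> 'g \<Rightarrow> bool" where
  "unique_nonid_commutator H s \<longleftrightarrow> s \<noteq> \<one>\<^bsub>H\<^esub> \<and> commutators H = {\<one>\<^bsub>H\<^esub>, s}"

definition LC_group :: "('g, 'b) monoid_scheme \<Rightarrow> bool" where
  "LC_group H \<longleftrightarrow> \<not> abelian H \<and>
     (\<forall>g \<in> carrier H. \<forall>h \<in> carrier H.
        g \<otimes>\<^bsub>H\<^esub> h = h \<otimes>\<^bsub>H\<^esub> g \<longleftrightarrow>
        (g \<in> grp_center H \<or> h \<in> grp_center H \<or> g \<otimes>\<^bsub>H\<^esub> h \<in> grp_center H))"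

definition SLC_group :: "('g, 'b) monoid_scheme \<Rightarrow> ('g \<Rightarrow> 'g) \<Rightarrow> bool" where
  "SLC_group H star \<longleftrightarrow> LC_group H \<and>
     (\<exists>s. unique_nonid_commutator H s \<and>
        (\<forall>h \<in> carrier H. (h \<in> grp_center H \<longrightarrow> star h = h) \<and>
                          (h \<notin> grp_center H \<longrightarrow> star h = s \<otimes>\<^bsub>H\<^esub> h)))"

definition group_involution :: "('g, 'b) monoid_scheme \<Rightarrow> ('g \<Rightarrow> 'g) \<Rightarrow> bool" where
  "group_involution G star \<longleftrightarrow>
     (\<forall>g \<in> carrier G. star g \<in> carrier G \<and> star (star g) = g) \<and>
     (\<forall>g \<in> carrier G. \<forall>h \<in> carrier G. star (g \<otimes>\<^bsub>G\<^esub> h) = star h \<otimes>\<^bsub>G\<^esub> star g)"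

definition orientation :: "('g, 'b) monoid_scheme \<Rightarrow> ('g \<Rightarrow> int) \<Rightarrow> bool" where
  "orientation G \<sigma> \<longleftrightarrow> (\<forall>g \<in> carrier G. \<sigma> g \<in> {1, -1}) \<and>
     (\<forall>g \<in> carrier G. \<forall>h \<in> carrier G. \<sigma> (g \<otimes>\<^bsub>G\<^esub> h) = \<sigma> g * \<sigma> h)"

definition orient_kernel :: "('g, 'b) monoid_scheme \<Rightarrow> ('g \<Rightarrow> int) \<Rightarrow> 'g set" where
  "orient_kernel G \<sigma> = {g \<in> carrier G. \<sigma> g = 1}"

definition grp_ring :: "('g, 'b) monoid_scheme \<Rightarrow> ('g \<Rightarrow> 'f::field) set" where
  "grp_ring G = {\<alpha>. finite {g. \<alpha> g \<noteq> 0} \<and> {g. \<alpha> g \<noteq> 0} \<subseteq> carrier G}"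

definition grp_ring_mult :: "('g, 'b) monoid_scheme \<Rightarrow> ('g \<Rightarrow> 'f::field) \<Rightarrow> ('g \<Rightarrow> 'f) \<Rightarrow> ('g \<Rightarrow> 'f)" where
  "grp_ring_mult G \<alpha> \<beta> = (\<lambda>x. if x \<in> carrier G
      then (\<Sum>g \<in> {g \<in> carrier G. \<alpha> g \<noteq> 0}. \<alpha> g * \<beta> (inv\<^bsub>G\<^esub> g \<otimes>\<^bsub>G\<^esub> x)) else 0)"

text \<open>Oriented involution: (\<Sum> a_g g)^\<circledast> = \<Sum> a_g \<sigma>(g) g^*; coefficient at h is a_{h*} \<sigma>(h*).\<close>
definition oriented_inv :: "('g, 'b) monoid_scheme \<Rightarrow> ('g \<Rightarrow> 'g) \<Rightarrow> ('g \<Rightarrow> int) \<Rightarrow> ('g \<Rightarrow> 'f::field) \<Rightarrow> ('g \<Rightarrow> 'f)" where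
  "oriented_inv G star \<sigma> \<alpha> = (\<lambda>h. if h \<in> carrier G then of_int (\<sigma> (star h)) * \<alpha> (star h) else 0)"

definition grp_ring_normal :: "'f::field itself \<Rightarrow> ('g, 'b) monoid_scheme \<Rightarrow> ('g \<Rightarrow> 'g) \<Rightarrow> ('g \<Rightarrow> int) \<Rightarrow> bool" where
  "grp_ring_normal (T :: 'f itself) G star \<sigma> \<longleftrightarrow>
     (\<forall>\<alpha> \<in> (grp_ring G :: ('g \<Rightarrow> 'f) set).
        grp_ring_mult G \<alpha> (oriented_inv G star \<sigma> \<alpha>) = grp_ring_mult G (oriented_inv G star \<sigma> \<alpha>) \<alpha>)"

end

theory Submission
  imports Defs
begin


context group begin

lemma canc1 [simp]: "x \<in> carrier G \<Longrightarrow> y \<in> carrier G \<Longrightarrow> x \<otimes> (inv x \<otimes> y) = y"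
  by (simp add: m_assoc [symmetric])
lemma canc2 [simp]: "x \<in> carrier G \<Longrightarrow> y \<in> carrier G \<Longrightarrow> inv x \<otimes> (x \<otimes> y) = y"
  by (simp add: m_assoc [symmetric])

lemma comm_eq_iff:
  assumes "x \<in> carrier G" "y \<in> carrier G" "c \<in> carrier G"
  shows "commutator G x y = c \<longleftrightarrow> x \<otimes> y = y \<otimes> x \<otimes> c"
proof -
  have "commutator G x y = inv (y \<otimes> x) \<otimes> (x \<otimes> y)"
    using assms by (simp add: commutator_def inv_mult_group m_assoc)
  then show ?thesis using assms
    by (metis inv_solve_left m_closed)
qed

lemma comm_carrier: "x \<in> carrier G \<Longrightarrow> y \<in> carrier G \<Longrightarrow> commutator G x y \<in> carrier G"
  by (simp add: commutator_def)

lemma comm_one_iff: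
  assumes "x \<in> carrier G" "y \<in> carrier G"
  shows "commutator G x y = \<one> \<longleftrightarrow> x \<otimes> y = y \<otimes> x"
  using comm_eq_iff[OF assms one_closed] assms by simp

lemma comm_swap:
  assumes "x \<in> carrier G" "y \<in> carrier G"
  shows "commutator G y x = inv (commutator G x y)"
  using assms by (simp add: commutator_def inv_mult_group m_assoc)

lemma comm_shift:
  assumes "x \<in> carrier G" "n \<in> carrier G"
  shows "commutator G x (x \<otimes> n) = commutator G x n"
  using assms by (simp add: commutator_def inv_mult_group m_assoc)

lemma comm_conj:
  assumes "z \<in> carrier G" "a \<in> carrier G" "b \<in> carrier G"
  shows "inv z \<otimes> commutator G a b \<otimes> z = commutator G (inv z \<otimes> a \<otimes> z) (inv z \<otimes> b \<otimes> z)"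
  using assms by (simp add: commutator_def inv_mult_group m_assoc)

end


lemma orient_one_neq0:
  assumes "orientation G \<sigma>" "g \<in> carrier G"
  shows "(of_int (\<sigma> g) :: 'f::field) \<noteq> 0"
  using assms unfolding orientation_def by auto

lemma star_iff:
  assumes "group_involution G star" "w \<in> carrier G" "x \<in> carrier G"
  shows "star w = x \<longleftrightarrow> w = star x"
  using assms unfolding group_involution_def by metis

lemma star_closed:
  assumes "group_involution G star" "w \<in> carrier G"
  shows "star w \<in> carrier G" "star (star w) = w"
  using assms unfolding group_involution_def by auto

lemma ring_single:
  fixes G :: "('g, 'b) monoid_scheme"
  assumes grp: "group G" and inv: "group_involution G star" and ori: "orientation G \<sigma>"
    and nrm: "grp_ring_normal TYPE('f::field) G star \<sigma>" and x: "x \<in> carrier G"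
  shows "x \<otimes>\<^bsub>G\<^esub> star x = star x \<otimes>\<^bsub>G\<^esub> x"
proof (rule ccontr)
  assume ne: "x \<otimes>\<^bsub>G\<^esub> star x \<noteq> star x \<otimes>\<^bsub>G\<^esub> x"
  interpret group G by (rule grp)
  define \<alpha> :: "'g \<Rightarrow> 'f" where "\<alpha> = (\<lambda>g. if g = x then 1 else 0)"
  have sx: "star x \<in> carrier G" "star (star x) = x" using star_closed[OF inv x] by auto
  have sa: "{g. \<alpha> g \<noteq> 0} = {x}" by (auto simp: \<alpha>_def)
  have ain: "\<alpha> \<in> grp_ring G" by (simp add: grp_ring_def sa x)
  define \<beta> where "\<beta> = oriented_inv G star \<sigma> \<alpha>"
  have eq: "grp_ring_mult G \<alpha> \<beta> = grp_ring_mult G \<beta> \<alpha>"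
    using nrm ain unfolding grp_ring_normal_def \<beta>_def by blast
  have bv: "\<beta> g = (if g = star x then of_int (\<sigma> x) else 0)" if "g \<in> carrier G" for g
    using that star_iff[OF inv that x] sx by (auto simp: \<beta>_def oriented_inv_def \<alpha>_def)
  have sa2: "{g \<in> carrier G. \<alpha> g \<noteq> 0} = {x}" using x by (auto simp: \<alpha>_def)
  have sb2: "{g \<in> carrier G. \<beta> g \<noteq> 0} = {star x}"
    using bv sx orient_one_neq0[OF ori x, where 'f='f] by (auto split: if_splits)
  define z where "z = x \<otimes>\<^bsub>G\<^esub> star x"
  have z: "z \<in> carrier G" using x sx by (simp add: z_def)
  have "grp_ring_mult G \<alpha> \<beta> z = \<beta> (inv\<^bsub>G\<^esub> x \<otimes>\<^bsub>G\<^esub> z)"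
    unfolding grp_ring_mult_def sa2 using z by (simp add: \<alpha>_def)
  also have "\<dots> = of_int (\<sigma> x)" using bv x sx by (simp add: z_def)
  finally have l: "grp_ring_mult G \<alpha> \<beta> z = of_int (\<sigma> x)" .
  have "grp_ring_mult G \<beta> \<alpha> z = \<beta> (star x) * \<alpha> (inv\<^bsub>G\<^esub> (star x) \<otimes>\<^bsub>G\<^esub> z)"
    unfolding grp_ring_mult_def sb2 using z by simp
  also have "\<alpha> (inv\<^bsub>G\<^esub> (star x) \<otimes>\<^bsub>G\<^esub> z) = 0"
  proof -
    have "inv\<^bsub>G\<^esub> (star x) \<otimes>\<^bsub>G\<^esub> z \<noteq> x"
    proof
      assume "inv\<^bsub>G\<^esub> (star x) \<otimes>\<^bsub>G\<^esub> z = x"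
      then have "star x \<otimes>\<^bsub>G\<^esub> (inv\<^bsub>G\<^esub> (star x) \<otimes>\<^bsub>G\<^esub> z) = star x \<otimes>\<^bsub>G\<^esub> x" by simp
      then show False using ne sx z by (simp add: z_def)
    qed
    then show ?thesis by (simp add: \<alpha>_def)
  qed
  finally have r: "grp_ring_mult G \<beta> \<alpha> z = 0" by simp
  show False using l r eq orient_one_neq0[OF ori x, where 'f='f] by metis
qed



lemma ring_pair:
  fixes G :: "('g, 'b) monoid_scheme"
  assumes grp: "group G" and inv: "group_involution G star" and ori: "orientation G \<sigma>"
    and nrm: "grp_ring_normal TYPE('f::field) G star \<sigma>" and two: "(2::'f) \<noteq> 0"
    and x: "x \<in> carrier G" and y: "y \<in> carrier G" and sxm: "\<sigma> x = -1" and sym: "\<sigma> y = -1"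
    and xy: "x \<noteq> y"
  shows "x \<otimes>\<^bsub>G\<^esub> star y = star x \<otimes>\<^bsub>G\<^esub> y \<or> x \<otimes>\<^bsub>G\<^esub> star y = star y \<otimes>\<^bsub>G\<^esub> x"
proof (rule ccontr)
  assume ne: "\<not> ?thesis"
  interpret group G by (rule grp)
  have cx: "x \<otimes>\<^bsub>G\<^esub> star x = star x \<otimes>\<^bsub>G\<^esub> x" by (rule ring_single[OF grp inv ori nrm x])
  have cy: "y \<otimes>\<^bsub>G\<^esub> star y = star y \<otimes>\<^bsub>G\<^esub> y" by (rule ring_single[OF grp inv ori nrm y])
  define \<alpha> :: "'g \<Rightarrow> 'f" where "\<alpha> = (\<lambda>g. if g = x \<or> g = y then 1 else 0)"
  have sx: "star x \<in> carrier G" "star (star x) = x" using star_closed[OF inv x] by auto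
  have sy: "star y \<in> carrier G" "star (star y) = y" using star_closed[OF inv y] by auto
  have sxy: "star x \<noteq> star y" using sx sy xy by metis
  have sa: "{g. \<alpha> g \<noteq> 0} = {x, y}" by (auto simp: \<alpha>_def)
  have ain: "\<alpha> \<in> grp_ring G" by (simp add: grp_ring_def sa x y)
  define \<beta> where "\<beta> = oriented_inv G star \<sigma> \<alpha>"
  have eq: "grp_ring_mult G \<alpha> \<beta> = grp_ring_mult G \<beta> \<alpha>"
    using nrm ain unfolding grp_ring_normal_def \<beta>_def by blast
  have bv: "\<beta> g = (if g = star x \<or> g = star y then -1 else 0)" if "g \<in> carrier G" for g
    using that star_iff[OF inv that x] star_iff[OF inv that y] sx sy sxm sym
    by (auto simp: \<beta>_def oriented_inv_def \<alpha>_def)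
  have sa2: "{g \<in> carrier G. \<alpha> g \<noteq> 0} = {x, y}" using x y by (auto simp: \<alpha>_def)
  have sb2: "{g \<in> carrier G. \<beta> g \<noteq> 0} = {star x, star y}"
    using bv sx sy by (auto split: if_splits)
  define z where "z = x \<otimes>\<^bsub>G\<^esub> star y"
  have z: "z \<in> carrier G" using x sy by (simp add: z_def)
  define w where "w = inv\<^bsub>G\<^esub> y \<otimes>\<^bsub>G\<^esub> z"
  have w: "w \<in> carrier G" using y z by (simp add: w_def)
  have "grp_ring_mult G \<alpha> \<beta> z = \<beta> (inv\<^bsub>G\<^esub> x \<otimes>\<^bsub>G\<^esub> z) + \<beta> w"
    unfolding grp_ring_mult_def sa2 using z xy by (simp add: \<alpha>_def w_def)
  also have "\<beta> (inv\<^bsub>G\<^esub> x \<otimes>\<^bsub>G\<^esub> z) = -1" using bv x sy by (simp add: z_def)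
  finally have l: "grp_ring_mult G \<alpha> \<beta> z = -1 + \<beta> w" .
  have "grp_ring_mult G \<beta> \<alpha> z = \<beta> (star x) * \<alpha> (inv\<^bsub>G\<^esub> (star x) \<otimes>\<^bsub>G\<^esub> z)
      + \<beta> (star y) * \<alpha> (inv\<^bsub>G\<^esub> (star y) \<otimes>\<^bsub>G\<^esub> z)"
    unfolding grp_ring_mult_def sb2 using z sxy by simp
  also have "\<alpha> (inv\<^bsub>G\<^esub> (star x) \<otimes>\<^bsub>G\<^esub> z) = 0"
  proof -
    have "inv\<^bsub>G\<^esub> (star x) \<otimes>\<^bsub>G\<^esub> z \<noteq> x"
    proof
      assume "inv\<^bsub>G\<^esub> (star x) \<otimes>\<^bsub>G\<^esub> z = x"
      then have "star x \<otimes>\<^bsub>G\<^esub> (inv\<^bsub>G\<^esub> (star x) \<otimes>\<^bsub>G\<^esub> z) = star x \<otimes>\<^bsub>G\<^esub> x" by simp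
      then have "x \<otimes>\<^bsub>G\<^esub> star y = x \<otimes>\<^bsub>G\<^esub> star x" using sx z cx by (simp add: z_def)
      then show False using sx sy x sxy by simp
    qed
    moreover have "inv\<^bsub>G\<^esub> (star x) \<otimes>\<^bsub>G\<^esub> z \<noteq> y"
    proof
      assume "inv\<^bsub>G\<^esub> (star x) \<otimes>\<^bsub>G\<^esub> z = y"
      then have "star x \<otimes>\<^bsub>G\<^esub> (inv\<^bsub>G\<^esub> (star x) \<otimes>\<^bsub>G\<^esub> z) = star x \<otimes>\<^bsub>G\<^esub> y" by simp
      then show False using sx z ne by (simp add: z_def)
    qed
    ultimately show ?thesis by (simp add: \<alpha>_def)
  qed
  also have "\<alpha> (inv\<^bsub>G\<^esub> (star y) \<otimes>\<^bsub>G\<^esub> z) = 0"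
  proof -
    have "inv\<^bsub>G\<^esub> (star y) \<otimes>\<^bsub>G\<^esub> z \<noteq> x"
    proof
      assume "inv\<^bsub>G\<^esub> (star y) \<otimes>\<^bsub>G\<^esub> z = x"
      then have "star y \<otimes>\<^bsub>G\<^esub> (inv\<^bsub>G\<^esub> (star y) \<otimes>\<^bsub>G\<^esub> z) = star y \<otimes>\<^bsub>G\<^esub> x" by simp
      then show False using sy z ne by (simp add: z_def)
    qed
    moreover have "inv\<^bsub>G\<^esub> (star y) \<otimes>\<^bsub>G\<^esub> z \<noteq> y"
    proof
      assume "inv\<^bsub>G\<^esub> (star y) \<otimes>\<^bsub>G\<^esub> z = y"
      then have "star y \<otimes>\<^bsub>G\<^esub> (inv\<^bsub>G\<^esub> (star y) \<otimes>\<^bsub>G\<^esub> z) = star y \<otimes>\<^bsub>G\<^esub> y" by simp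
      then have "x \<otimes>\<^bsub>G\<^esub> star y = y \<otimes>\<^bsub>G\<^esub> star y" using sy z cy by (simp add: z_def)
      then show False using sy x y xy by simp
    qed
    ultimately show ?thesis by (simp add: \<alpha>_def)
  qed
  finally have r: "grp_ring_mult G \<beta> \<alpha> z = 0" by simp
  have "-1 + \<beta> w = (0::'f)" using l r eq by metis
  moreover have "\<beta> w = 0 \<or> \<beta> w = -1" using bv w by simp
  ultimately show False using two by (auto simp: algebra_simps)
qed



lemma (in group) key_alg:
  assumes c: "x \<in> carrier G" "n \<in> carrier G" "s \<in> carrier G" "xs \<in> carrier G"
    and sx: "s \<otimes> x = x \<otimes> s" and sn: "s \<otimes> n = n \<otimes> s" and si: "inv s = s"
    and cx: "x \<otimes> xs = xs \<otimes> x" and kn: "(x \<otimes> xs) \<otimes> n = n \<otimes> (x \<otimes> xs)"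
    and e: "e = n \<or> e = s \<otimes> n"
    and h: "x \<otimes> (e \<otimes> xs) = xs \<otimes> (x \<otimes> n) \<or> x \<otimes> (e \<otimes> xs) = e \<otimes> xs \<otimes> x"
  shows "commutator G x n \<in> {\<one>, s}"
proof -
  have ec: "e \<in> carrier G" using e c by auto
  have "x \<otimes> e = e \<otimes> x \<or> x \<otimes> e = n \<otimes> x"
  proof (cases "x \<otimes> (e \<otimes> xs) = e \<otimes> xs \<otimes> x")
    case True
    then have "x \<otimes> e \<otimes> xs = e \<otimes> x \<otimes> xs" using cx c ec by (simp add: m_assoc)
    then show ?thesis using c ec by (metis m_closed right_cancel)
  next
    case False
    then have "x \<otimes> (e \<otimes> xs) = xs \<otimes> (x \<otimes> n)" using h by blast
    also have "\<dots> = (x \<otimes> xs) \<otimes> n" using cx c by (simp add: m_assoc[symmetric])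
    also have "\<dots> = n \<otimes> (x \<otimes> xs)" by (rule kn)
    finally have "(x \<otimes> e) \<otimes> xs = (n \<otimes> x) \<otimes> xs" using c ec by (simp add: m_assoc)
    then show ?thesis using c ec by (metis m_closed right_cancel)
  qed
  then consider "x \<otimes> e = e \<otimes> x" | "x \<otimes> e = n \<otimes> x" by blast
  then show ?thesis
  proof cases
    case 1
    have "x \<otimes> n = n \<otimes> x"
      using e
    proof
      assume "e = n" then show ?thesis using 1 by simp
    next
      assume "e = s \<otimes> n"
      then have "s \<otimes> (x \<otimes> n) = s \<otimes> (n \<otimes> x)" using 1 c sx by (simp add: m_assoc[symmetric])
      then show ?thesis using c by (metis m_closed Units_eq Units_l_cancel)
    qed
    then show ?thesis using comm_one_iff c by simp
  next
    case 2
    show ?thesis using e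
    proof
      assume "e = n" then show ?thesis using 2 comm_one_iff c by simp
    next
      assume "e = s \<otimes> n"
      then have "s \<otimes> (x \<otimes> n) = n \<otimes> x" using 2 c sx by (simp add: m_assoc[symmetric])
      then have "inv s \<otimes> (s \<otimes> (x \<otimes> n)) = s \<otimes> (n \<otimes> x)" using si by simp
      then have "x \<otimes> n = s \<otimes> (n \<otimes> x)" using c by (simp add: m_assoc[symmetric])
      also have "\<dots> = (s \<otimes> n) \<otimes> x" using c by (simp add: m_assoc)
      also have "\<dots> = n \<otimes> (s \<otimes> x)" using c sn by (simp add: m_assoc)
      also have "\<dots> = n \<otimes> x \<otimes> s" using c sx by (simp add: m_assoc)
      finally have "x \<otimes> n = n \<otimes> x \<otimes> s" .
      then show ?thesis using comm_eq_iff c by simp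
    qed
  qed
qed



lemma (in group) main:
  assumes two: "(2::'f::field) \<noteq> 0"
    and inv: "group_involution G star"
    and ori: "orientation G \<sigma>"
    and kk: "\<forall>g \<in> carrier G. g \<otimes> star g \<in> orient_kernel G \<sigma>"
    and nrm: "grp_ring_normal TYPE('f) G star \<sigma>"
    and slc: "SLC_group (G\<lparr>carrier := orient_kernel G \<sigma>\<rparr>) star"
  shows "\<exists>s. unique_nonid_commutator G s \<and> s \<in> grp_center G"
proof -
  define N where "N = orient_kernel G \<sigma>"
  have Nmem: "n \<in> N \<longleftrightarrow> n \<in> carrier G \<and> \<sigma> n = 1" for n by (simp add: N_def orient_kernel_def)
  have sv: "g \<in> carrier G \<Longrightarrow> \<sigma> g = 1 \<or> \<sigma> g = -1" for g using ori by (auto simp: orientation_def)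
  have hom: "g \<in> carrier G \<Longrightarrow> h \<in> carrier G \<Longrightarrow> \<sigma> (g \<otimes> h) = \<sigma> g * \<sigma> h" for g h
    using ori by (auto simp: orientation_def)
  have s1: "\<sigma> \<one> = 1"
  proof -
    have "\<sigma> \<one> = \<sigma> \<one> * \<sigma> \<one>" using hom[of \<one> \<one>] by simp
    then show ?thesis using sv[of \<one>] by auto
  qed
  have sinv: "\<sigma> (inv x) = \<sigma> x" if "x \<in> carrier G" for x
  proof -
    have "\<sigma> (inv x) * \<sigma> x = 1" using hom[of "inv x" x] that s1 by simp
    then show ?thesis using sv[of x] sv[of "inv x"] that by auto
  qed
  have sub: "subgroup N G"
    by (rule subgroup.intro) (auto simp: Nmem hom sinv s1)
  have Nc: "N \<subseteq> carrier G" using sub subgroup.subset by blast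
  define H where "H = G\<lparr>carrier := N\<rparr>"
  from slc obtain s where u: "unique_nonid_commutator H s"
    and st: "\<forall>h \<in> N. (h \<in> grp_center H \<longrightarrow> star h = h) \<and> (h \<notin> grp_center H \<longrightarrow> star h = s \<otimes> h)"
    unfolding SLC_group_def H_def N_def by auto
  have cH: "commutator H a b = commutator G a b" if "a \<in> N" "b \<in> N" for a b
    using that m_inv_consistent[OF sub] by (simp add: commutator_def H_def)
  have comH: "commutators H = {commutator G a b | a b. a \<in> N \<and> b \<in> N}"
    unfolding commutators_def using cH by (auto simp: H_def) (metis)
  have s_ne: "s \<noteq> \<one>" and cs: "commutators H = {\<one>, s}"
    using u by (auto simp: unique_nonid_commutator_def H_def)
  have cN: "commutator G a b \<in> {\<one>, s}" if "a \<in> N" "b \<in> N" for a b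
    using that comH cs by blast
  obtain a b where ab: "a \<in> N" "b \<in> N" "s = commutator G a b"
    using comH cs by blast
  have sc: "s \<in> carrier G" using ab Nc comm_carrier by auto
  have conj: "inv z \<otimes> n \<otimes> z \<in> N" if "z \<in> carrier G" "n \<in> N" for z n
    using that Nc sv[OF that(1)] by (auto simp: Nmem hom sinv)
  have scen: "s \<otimes> z = z \<otimes> s" if z: "z \<in> carrier G" for z
  proof -
    have "inv z \<otimes> s \<otimes> z = commutator G (inv z \<otimes> a \<otimes> z) (inv z \<otimes> b \<otimes> z)"
      using comm_conj[OF z] ab Nc by auto
    then have m: "inv z \<otimes> s \<otimes> z \<in> {\<one>, s}" using cN conj ab z by simp
    have "inv z \<otimes> s \<otimes> z \<noteq> \<one>"
    proof
      assume "inv z \<otimes> s \<otimes> z = \<one>"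
      then have "z \<otimes> (inv z \<otimes> s \<otimes> z) = z" using z by simp
      then have "s \<otimes> z = z" using z sc by (simp add: m_assoc)
      then show False using s_ne z sc by simp
    qed
    then have "inv z \<otimes> s \<otimes> z = s" using m by blast
    then have "z \<otimes> (inv z \<otimes> s \<otimes> z) = z \<otimes> s" by simp
    then show ?thesis using z sc by (simp add: m_assoc)
  qed
  have sis: "inv s = s"
  proof -
    have "inv s = commutator G b a" using comm_swap[of a b] ab Nc by (metis subsetD)
    then have "inv s \<in> {\<one>, s}" using cN ab by simp
    moreover have "inv s \<noteq> \<one>" using s_ne sc by simp
    ultimately show ?thesis by blast
  qed
  have kcent: "(x \<otimes> star x) \<otimes> n = n \<otimes> (x \<otimes> star x)" if x: "x \<in> carrier G" and n: "n \<in> N" for x n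
  proof -
    have sx: "star x \<in> carrier G" "star (star x) = x" using star_closed[OF inv x] by auto
    have kN: "x \<otimes> star x \<in> N" using kk x N_def by auto
    have "star (x \<otimes> star x) = x \<otimes> star x"
      using inv x sx unfolding group_involution_def by metis
    then have "x \<otimes> star x \<in> grp_center H"
      using st kN s_ne sc Nc by (metis r_cancel_one subsetD)
    then show ?thesis using n by (simp add: grp_center_def H_def)
  qed
  have starN: "star n = n \<or> star n = s \<otimes> n" if "n \<in> N" for n using st that by blast
  have keyx: "commutator G x n \<in> {\<one>, s}" if x: "x \<in> carrier G" and sx1: "\<sigma> x \<noteq> 1" and n: "n \<in> N" for x n
  proof (cases "n = \<one>")
    case True
    then show ?thesis using comm_one_iff x by simp
  next
    case False
    have nc: "n \<in> carrier G" using n Nc by auto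
    define y where "y = x \<otimes> n"
    have y: "y \<in> carrier G" using x nc by (simp add: y_def)
    have sxm: "\<sigma> x = -1" using sv x sx1 by auto
    have sym: "\<sigma> y = -1" using sxm n by (simp add: y_def hom x Nmem)
    have xy: "x \<noteq> y" using False x nc by (simp add: y_def)
    have rp: "x \<otimes> star y = star x \<otimes> y \<or> x \<otimes> star y = star y \<otimes> x"
      by (rule ring_pair[OF is_group inv ori nrm two x y sxm sym xy])
    have sy: "star y = star n \<otimes> star x" using inv x nc unfolding group_involution_def y_def by blast
    have sxc: "star x \<in> carrier G" using star_closed[OF inv x] by auto
    show ?thesis
    proof (rule key_alg[OF x nc sc sxc scen[OF x] scen[OF nc] sis ring_single[OF is_group inv ori nrm x] kcent[OF x n] starN[OF n]])
      show "x \<otimes> (star n \<otimes> star x) = star x \<otimes> (x \<otimes> n) \<or>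
            x \<otimes> (star n \<otimes> star x) = star n \<otimes> star x \<otimes> x"
        using rp sy by (simp add: y_def)
    qed
  qed
  have all: "commutator G x y \<in> {\<one>, s}" if x: "x \<in> carrier G" and y: "y \<in> carrier G" for x y
  proof (cases "\<sigma> x = 1")
    case xT: True
    show ?thesis
    proof (cases "\<sigma> y = 1")
      case True
      then show ?thesis using cN xT x y Nmem by auto
    next
      case False
      have "commutator G y x \<in> {\<one>, s}" using keyx[OF y False] xT x Nmem by auto
      then show ?thesis using comm_swap[OF y x] sis by auto
    qed
  next
    case xF: False
    show ?thesis
    proof (cases "\<sigma> y = 1")
      case True
      then show ?thesis using keyx[OF x xF] y Nmem by auto
    next
      case False
      define n where "n = inv x \<otimes> y"
      have nN: "n \<in> N" using x y xF False sv[OF x] sv[OF y] by (auto simp: n_def Nmem hom sinv)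
      have "y = x \<otimes> n" using x y by (simp add: n_def)
      then have "commutator G x y = commutator G x n" using comm_shift[of x n] x y nN Nc by auto
      then show ?thesis using keyx[OF x xF nN] by simp
    qed
  qed
  have "commutators G = {\<one>, s}"
  proof
    show "commutators G \<subseteq> {\<one>, s}" using all by (auto simp: commutators_def)
    have "\<one> = commutator G \<one> \<one>" by (simp add: commutator_def)
    moreover have "s = commutator G a b" using ab by simp
    ultimately show "{\<one>, s} \<subseteq> commutators G" using ab Nc by (auto simp: commutators_def)
  qed
  then have "unique_nonid_commutator G s" using s_ne by (simp add: unique_nonid_commutator_def)
  moreover have "s \<in> grp_center G" using sc scen by (simp add: grp_center_def)
  ultimately show ?thesis by blast
qed


theorem lemma10:
  fixes G :: "('g, 'b) monoid_scheme"
    and star :: "'g \<Rightarrow> 'g"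
    and \<sigma> :: "'g \<Rightarrow> int"
  assumes "infinite (UNIV :: 'f::field set)"
    and "(2::'f) \<noteq> 0"
    and "group G"
    and "\<not> abelian G"
    and "group_involution G star"
    and "orientation G \<sigma>"
    and "\<exists>g \<in> carrier G. \<sigma> g \<noteq> 1"
    and "\<forall>g \<in> carrier G. g \<otimes>\<^bsub>G\<^esub> star g \<in> orient_kernel G \<sigma>"
    and "grp_ring_normal TYPE('f) G star \<sigma>"
    and "SLC_group (G\<lparr>carrier := orient_kernel G \<sigma>\<rparr>) star"
  shows "\<exists>s. unique_nonid_commutator G s \<and> s \<in> grp_center G"
  using group.main[OF assms(3) assms(2) assms(5) assms(6) assms(8) assms(9) assms(10)] .

end
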